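(* Let $n\in\mathbb N$, let $(R,\mathcal R,\rho)$ be a $\sigma$-finite measure space with $\rho(R)>0$, and let $E_1,\dots,E_L\in\mathcal T$ be pairwise disjoint and locally ergodic with respect to $\mathbb G$. Put $\mathcal T_E:=\mathcal T|_{T\setminus(E_1\cup\dots\cup E_L)}\vee\sigma(E_1,\dots,E_L)$ and $\mathcal N_n:=\{A\in(\mathcal T\otimes\mathcal R)^{\otimes n}:(\tau\otimes\rho)^{\otimes n}(A)=0\}$. Then $\mathcal I(\mathbb G[n])\subseteq(\mathcal T_E\otimes\mathcal R)^{\otimes n}\vee\mathcal N_n$.
   Context: $(T,\mathcal T,\tau,(\mathcal T_N)_{N\ge0})$ is a filtered probability space with refining finite partitions $T=T_{N,1}\cup\dots\cup T_{N,L_N}$, $N=0,1,2,\dots$, such that $\mathcal T_N=\sigma(T_{N,1},\dots,T_{N,L_N})$, $\tau(T_{N,l})>0$ for all $N,l$, $\lim_N\sup_l\tau(T_{N,l})=0$, and $\mathcal T=\bigvee_N\mathcal T_N$. $\mathbb G$ is a countable group of bijective bi-measurable maps $g:T\to T$. A set $E\subseteq T$ with $\tau(E)>0$ is finite locally ergodic w.r.t. $\mathbb G$ if there is $N_E\ge0$ with $E\in\mathcal T_{N_E}$ such that for all $N\ge N_E$ and all $l\neq m$ with $A:=T_{N,l}\cup T_{N,m}\subseteq E$ there is a subgroup $\mathbb H\subseteq\mathbb G$ with (a) $g|_{A^c}=\mathrm{id}_{A^c}$ for all $g\in\mathbb H$, and (b) the probability space $(A,\mathcal I(\mathbb H|_A),\tau_A)$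 is trivial (only sets of measure $0$ or $1$), where $\mathbb H|_A$ is the group of restrictions to $A$, $\tau_A$ the normalized restriction of $\tau$ to $A$. $E$ is locally ergodic w.r.t. $\mathbb G$ if $E=\bigcup_jE^j$ for an increasing sequence of finite locally ergodic sets $E^j\subseteq E$. $\mathbb G[n]$ is the group of maps $g[n]:(T\times R)^n\to(T\times R)^n$, $((t_1,x_1),\dots,(t_n,x_n))\mapsto((g(t_1),x_1),\dots,(g(t_n),x_n))$, $g\in\mathbb G$. For a group $\mathbb A$ of automorphisms of a measurable space $(S,\Sigma)$, the invariant $\sigma$-algebra is $\mathcal I(\mathbb A)=\{B\in\Sigma:B=T^{-1}(B)\ \forall T\in\mathbb A\}$; here $\Sigma=(\mathcal T\otimes\mathcal R)^{\otimes n}$. $\mathcal T|_A$ denotes the trace $\sigma$-algebra on $A$. *)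

theory Defs
  imports "HOL-Probability.Probability"
begin

text \<open>The probability space (T, \<T>, \<tau>) is modelled on a type 't with space = UNIV.
  The N-th partition consists of the cells P N l for l < Lp N.\<close>

definition partition_filtration ::
  "'t measure \<Rightarrow> (nat \<Rightarrow> nat) \<Rightarrow> (nat \<Rightarrow> nat \<Rightarrow> 't set) \<Rightarrow> bool" where
  "partition_filtration \<tau> Lp P \<longleftrightarrow>
     (\<forall>N. \<forall>l<Lp N. P N l \<in> sets \<tau> \<and> measure \<tau> (P N l) > 0)
   \<and> (\<forall>N. (\<Union>l<Lp N. P N l) = space \<tau>)
   \<and> (\<forall>N. disjoint_family_on (P N) {..<Lp N})
   \<and> (\<forall>N. \<forall>l<Lp (Suc N). \<exists>m<Lp N. P (Suc N) l \<subseteq> P N m)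
   \<and> ((\<lambda>N. Max {measure \<tau> (P N l) | l. l < Lp N}) \<longlonglongrightarrow> 0)
   \<and> sets \<tau> = sigma_sets (space \<tau>) (\<Union>N. {P N l | l. l < Lp N})"

definition TN :: "'t measure \<Rightarrow> (nat \<Rightarrow> nat) \<Rightarrow> (nat \<Rightarrow> nat \<Rightarrow> 't set) \<Rightarrow> nat \<Rightarrow> 't set set" where
  "TN \<tau> Lp P N = sigma_sets (space \<tau>) {P N l | l. l < Lp N}"

definition aut_group :: "'t measure \<Rightarrow> ('t \<Rightarrow> 't) set \<Rightarrow> bool" where
  "aut_group \<tau> G \<longleftrightarrow> countable G \<and> id \<in> G
     \<and> (\<forall>g\<in>G. \<forall>h\<in>G. g \<circ> h \<in> G)
     \<and> (\<forall>g\<in>G. bij g \<and> inv g \<in> G \<and> g \<in> measurable \<tau> \<tau> \<and> inv g \<in> measurable \<tau> \<tau>)"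

definition subgroup_of :: "('t \<Rightarrow> 't) set \<Rightarrow> ('t \<Rightarrow> 't) set \<Rightarrow> bool" where
  "subgroup_of H G \<longleftrightarrow> H \<subseteq> G \<and> id \<in> H \<and> (\<forall>g\<in>H. \<forall>h\<in>H. g \<circ> h \<in> H)
     \<and> (\<forall>g\<in>H. inv g \<in> H)"

text \<open>(A, I(H|_A), \<tau>_A) is trivial: every H|_A-invariant set in the trace sigma-algebra
  \<T>|_A has normalized measure 0 or 1.\<close>
definition invariant_trivial :: "'t measure \<Rightarrow> ('t \<Rightarrow> 't) set \<Rightarrow> 't set \<Rightarrow> bool" where
  "invariant_trivial \<tau> H A \<longleftrightarrow>
     (\<forall>B. B \<in> {C \<inter> A | C. C \<in> sets \<tau>} \<and> (\<forall>g\<in>H. {x\<in>A. g x \<in> B} = B)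
        \<longrightarrow> measure \<tau> B / measure \<tau> A = 0 \<or> measure \<tau> B / measure \<tau> A = 1)"

definition finite_locally_ergodic ::
  "'t measure \<Rightarrow> (nat \<Rightarrow> nat) \<Rightarrow> (nat \<Rightarrow> nat \<Rightarrow> 't set) \<Rightarrow> ('t \<Rightarrow> 't) set \<Rightarrow> 't set \<Rightarrow> bool" where
  "finite_locally_ergodic \<tau> Lp P G E \<longleftrightarrow> E \<in> sets \<tau> \<and> measure \<tau> E > 0 \<and>
     (\<exists>NE. E \<in> TN \<tau> Lp P NE \<and>
       (\<forall>N\<ge>NE. \<forall>l<Lp N. \<forall>m<Lp N. l \<noteq> m \<and> P N l \<union> P N m \<subseteq> E \<longrightarrow>
          (\<exists>H. subgroup_of H G
             \<and> (\<forall>g\<in>H. \<forall>x. x \<notin> P N l \<union> P N m \<longrightarrow> g x = x)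
             \<and> invariant_trivial \<tau> H (P N l \<union> P N m))))"

definition locally_ergodic ::
  "'t measure \<Rightarrow> (nat \<Rightarrow> nat) \<Rightarrow> (nat \<Rightarrow> nat \<Rightarrow> 't set) \<Rightarrow> ('t \<Rightarrow> 't) set \<Rightarrow> 't set \<Rightarrow> bool" where
  "locally_ergodic \<tau> Lp P G E \<longleftrightarrow>
     (\<exists>Ej. incseq Ej \<and> (\<forall>j. Ej j \<subseteq> E \<and> finite_locally_ergodic \<tau> Lp P G (Ej j))
        \<and> (\<Union>j. Ej j) = E)"

text \<open>g[n] acting on (T \<times> R)^n, points of (T \<times> R)^n being functions on {..<n}.\<close>
definition gn :: "('t \<Rightarrow> 't) \<Rightarrow> nat \<Rightarrow> (nat \<Rightarrow> 't \<times> 'r) \<Rightarrow> (nat \<Rightarrow> 't \<times> 'r)" where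
  "gn g n x = (\<lambda>i\<in>{..<n}. (g (fst (x i)), snd (x i)))"

definition invariant_sets :: "'a measure \<Rightarrow> ('a \<Rightarrow> 'a) set \<Rightarrow> 'a set set" where
  "invariant_sets M F = {B \<in> sets M. \<forall>f\<in>F. B = f -` B \<inter> space M}"

definition TE :: "'t measure \<Rightarrow> nat \<Rightarrow> (nat \<Rightarrow> 't set) \<Rightarrow> 't measure" where
  "TE \<tau> K E = sigma (space \<tau>)
     ({B \<inter> (space \<tau> - (\<Union>i<K. E i)) | B. B \<in> sets \<tau>} \<union> E ` {..<K})"

end

theory Submission
  imports Defs
begin

locale pf_setting = prob_space \<tau> for \<tau> :: "'t measure" +
  fixes Lp :: "nat \<Rightarrow> nat" and P :: "nat \<Rightarrow> nat \<Rightarrow> 't set" and G :: "('t \<Rightarrow> 't) set"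
  assumes spc: "space \<tau> = UNIV"
    and pf: "partition_filtration \<tau> Lp P" and ag: "aut_group \<tau> G"
begin

lemma cell_sets: "l < Lp N \<Longrightarrow> P N l \<in> sets \<tau>"
  using pf unfolding partition_filtration_def by blast

lemma cell_pos: "l < Lp N \<Longrightarrow> measure \<tau> (P N l) > 0"
  using pf unfolding partition_filtration_def by blast

lemma cell_cover: "\<exists>l<Lp N. x \<in> P N l"
proof -
  have "(\<Union>l<Lp N. P N l) = UNIV" using pf spc unfolding partition_filtration_def by blast
  then show ?thesis by blast
qed

lemma cell_disj: "l < Lp N \<Longrightarrow> m < Lp N \<Longrightarrow> l \<noteq> m \<Longrightarrow> P N l \<inter> P N m = {}"
  using pf unfolding partition_filtration_def disjoint_family_on_def by blast

lemma cell_refine1: "l < Lp (Suc N) \<Longrightarrow> \<exists>m<Lp N. P (Suc N) l \<subseteq> P N m"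
  using pf unfolding partition_filtration_def by blast

lemma cell_refine: "N \<le> N' \<Longrightarrow> l' < Lp N' \<Longrightarrow> \<exists>l<Lp N. P N' l' \<subseteq> P N l"
proof (induction N' arbitrary: l' rule: dec_induct)
  case base then show ?case by blast
next
  case (step k)
  obtain m where "m < Lp k" "P (Suc k) l' \<subseteq> P k m" using cell_refine1 step.prems by blast
  with step.IH[of m] show ?case by blast
qed

definition mx :: "nat \<Rightarrow> real" where
  "mx N = Max {measure \<tau> (P N l) | l. l < Lp N}"

lemma mx_ge: "l < Lp N \<Longrightarrow> measure \<tau> (P N l) \<le> mx N"
proof -
  assume l: "l < Lp N"
  have fin: "finite {measure \<tau> (P N l) | l. l < Lp N}"
  proof -
    have "{measure \<tau> (P N l) | l. l < Lp N} = (\<lambda>l. measure \<tau> (P N l)) ` {..<Lp N}" by auto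
    then show ?thesis by simp
  qed
  show ?thesis unfolding mx_def using l by (intro Max_ge[OF fin]) auto
qed

lemma mx_nonneg: "0 \<le> mx N"
proof -
  obtain l where "l < Lp N" using cell_cover by blast
  then show ?thesis using mx_ge[of l N] measure_nonneg[of \<tau> "P N l"] by linarith
qed

lemma mx_lim: "mx \<longlonglongrightarrow> 0"
  using pf unfolding partition_filtration_def mx_def[abs_def] by blast

lemma TN_cells0: "X \<in> TN \<tau> Lp P N \<Longrightarrow> l < Lp N \<Longrightarrow> P N l \<subseteq> X \<or> P N l \<inter> X = {}"
  unfolding TN_def
proof (induction X arbitrary: l rule: sigma_sets.induct)
  case (Basic a)
  then obtain l' where "a = P N l'" "l' < Lp N" by auto
  then show ?case using cell_disj[of l N l'] Basic.prems by (cases "l = l'") auto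
next
  case Empty then show ?case by simp
next
  case (Compl a) then show ?case using spc by blast
next
  case (Union a)
  then show ?case by blast
qed

lemma TN_cells: "X \<in> TN \<tau> Lp P N0 \<Longrightarrow> N0 \<le> N \<Longrightarrow> l < Lp N \<Longrightarrow> P N l \<subseteq> X \<or> P N l \<inter> X = {}"
proof -
  assume X: "X \<in> TN \<tau> Lp P N0" and N: "N0 \<le> N" and l: "l < Lp N"
  obtain l0 where l0: "l0 < Lp N0" "P N l \<subseteq> P N0 l0" using cell_refine[OF N l] by blast
  from TN_cells0[OF X l0(1)] l0(2) show ?thesis by blast
qed

lemma null_of_measure0: "S \<in> sets \<tau> \<Longrightarrow> measure \<tau> S = 0 \<Longrightarrow> S \<in> null_sets \<tau>"
  by (simp add: emeasure_eq_measure null_setsI)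

end

context pf_setting begin

lemma G_bij: "g \<in> G \<Longrightarrow> bij g"
  using ag unfolding aut_group_def by blast

lemma fle_pair:
  assumes fle: "finite_locally_ergodic \<tau> Lp P G F" and S: "S \<in> sets \<tau>"
    and inv: "\<forall>g\<in>G. (\<forall>p\<in>Z. g p = p) \<longrightarrow> (\<forall>s. g s \<in> S \<longleftrightarrow> s \<in> S)"
  shows "\<exists>NE. F \<in> TN \<tau> Lp P NE \<and>
    (\<forall>N l m. NE \<le> N \<and> l < Lp N \<and> m < Lp N \<and> l \<noteq> m \<and> P N l \<subseteq> F \<and> P N m \<subseteq> F
      \<and> P N l \<inter> Z = {} \<and> P N m \<inter> Z = {} \<longrightarrow>
      (measure \<tau> (S \<inter> P N l) = 0 \<and> measure \<tau> (S \<inter> P N m) = 0) \<or>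
      (measure \<tau> (P N l - S) = 0 \<and> measure \<tau> (P N m - S) = 0))"
proof -
  from fle obtain NE where NE: "F \<in> TN \<tau> Lp P NE" and
    loc: "\<forall>N\<ge>NE. \<forall>l<Lp N. \<forall>m<Lp N. l \<noteq> m \<and> P N l \<union> P N m \<subseteq> F \<longrightarrow>
          (\<exists>H. subgroup_of H G
             \<and> (\<forall>g\<in>H. \<forall>x. x \<notin> P N l \<union> P N m \<longrightarrow> g x = x)
             \<and> invariant_trivial \<tau> H (P N l \<union> P N m))"
    unfolding finite_locally_ergodic_def by blast
  show ?thesis
  proof (intro exI[of _ NE] conjI NE allI impI)
    fix N l m assume asm: "NE \<le> N \<and> l < Lp N \<and> m < Lp N \<and> l \<noteq> m \<and> P N l \<subseteq> F \<and> P N m \<subseteq> F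
      \<and> P N l \<inter> Z = {} \<and> P N m \<inter> Z = {}"
    then have N: "NE \<le> N" and l: "l < Lp N" and m: "m < Lp N" and lm: "l \<noteq> m"
      and lF: "P N l \<subseteq> F" and mF: "P N m \<subseteq> F" and l0: "P N l \<inter> Z = {}" and m0: "P N m \<inter> Z = {}" by auto
    define A where "A = P N l \<union> P N m"
    obtain H where H: "subgroup_of H G" "\<forall>g\<in>H. \<forall>x. x \<notin> A \<longrightarrow> g x = x"
      "invariant_trivial \<tau> H A"
      using loc N l m lm lF mF unfolding A_def by blast
    have Asets: "A \<in> sets \<tau>" unfolding A_def using cell_sets l m by auto
    have "\<forall>g\<in>H. {x\<in>A. g x \<in> S \<inter> A} = S \<inter> A"
    proof
      fix g assume g: "g \<in> H"
      then have gG: "g \<in> G" using H(1) unfolding subgroup_of_def by blast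
      have fixP: "\<forall>p\<in>Z. g p = p" using H(2) g l0 m0 unfolding A_def by blast
      have gA: "g x \<in> A" if "x \<in> A" for x
      proof (rule ccontr)
        assume "g x \<notin> A"
        then have "g (g x) = g x" using H(2) g by blast
        then have "g x = x" using G_bij[OF gG] by (metis bij_pointE)
        with that \<open>g x \<notin> A\<close> show False by simp
      qed
      show "{x\<in>A. g x \<in> S \<inter> A} = S \<inter> A" using gA inv gG fixP by blast
    qed
    moreover have "S \<inter> A \<in> {C \<inter> A | C. C \<in> sets \<tau>}" using S by blast
    ultimately have r: "measure \<tau> (S \<inter> A) / measure \<tau> A = 0 \<or> measure \<tau> (S \<inter> A) / measure \<tau> A = 1"
      using H(3) unfolding invariant_trivial_def by blast
    have disj: "P N l \<inter> P N m = {}" using cell_disj l m lm by blast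
    have pl: "measure \<tau> (P N l) > 0" "measure \<tau> (P N m) > 0" using cell_pos l m by auto
    have mA: "measure \<tau> A = measure \<tau> (P N l) + measure \<tau> (P N m)"
      unfolding A_def using finite_measure_Union[OF cell_sets[OF l] cell_sets[OF m] disj] .
    have mSA: "measure \<tau> (S \<inter> A) = measure \<tau> (S \<inter> P N l) + measure \<tau> (S \<inter> P N m)"
    proof -
      have "S \<inter> A = (S \<inter> P N l) \<union> (S \<inter> P N m)" unfolding A_def by blast
      moreover have "measure \<tau> ((S \<inter> P N l) \<union> (S \<inter> P N m)) = measure \<tau> (S \<inter> P N l) + measure \<tau> (S \<inter> P N m)"
        using S cell_sets[OF l] cell_sets[OF m] disj by (intro finite_measure_Union) auto
      ultimately show ?thesis by simp
    qed
    have le1: "measure \<tau> (S \<inter> P N l) \<le> measure \<tau> (P N l)"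
      using cell_sets[OF l] by (intro finite_measure_mono) auto
    have le2: "measure \<tau> (S \<inter> P N m) \<le> measure \<tau> (P N m)"
      using cell_sets[OF m] by (intro finite_measure_mono) auto
    have d1: "measure \<tau> (P N l - S) = measure \<tau> (P N l) - measure \<tau> (S \<inter> P N l)"
      using finite_measure_Diff'[OF cell_sets[OF l] S] by (simp add: Int_commute)
    have d2: "measure \<tau> (P N m - S) = measure \<tau> (P N m) - measure \<tau> (S \<inter> P N m)"
      using finite_measure_Diff'[OF cell_sets[OF m] S] by (simp add: Int_commute)
    have nn: "0 \<le> measure \<tau> (S \<inter> P N l)" "0 \<le> measure \<tau> (S \<inter> P N m)" by auto
    from r show "(measure \<tau> (S \<inter> P N l) = 0 \<and> measure \<tau> (S \<inter> P N m) = 0) \<or>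
      (measure \<tau> (P N l - S) = 0 \<and> measure \<tau> (P N m - S) = 0)"
    proof
      assume "measure \<tau> (S \<inter> A) / measure \<tau> A = 0"
      then have "measure \<tau> (S \<inter> A) = 0" using mA pl by simp
      then show ?thesis using mSA nn by linarith
    next
      assume "measure \<tau> (S \<inter> A) / measure \<tau> A = 1"
      then have "measure \<tau> (S \<inter> A) = measure \<tau> A" using mA pl by (simp add: divide_eq_1_iff)
      then show ?thesis using mSA mA le1 le2 d1 d2 by linarith
    qed
  qed
qed

end

context pf_setting begin

lemma fle_01:
  assumes fle: "finite_locally_ergodic \<tau> Lp P G F" and S: "S \<in> sets \<tau>" and Z: "finite Z"
    and inv: "\<forall>g\<in>G. (\<forall>p\<in>Z. g p = p) \<longrightarrow> (\<forall>s. g s \<in> S \<longleftrightarrow> s \<in> S)"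
  shows "measure \<tau> (S \<inter> F) = 0 \<or> measure \<tau> (F - S) = 0"
proof -
  have Fs: "F \<in> sets \<tau>" using fle unfolding finite_locally_ergodic_def by blast
  obtain NE where NE: "F \<in> TN \<tau> Lp P NE" and
    pair0: "\<forall>N l m. NE \<le> N \<and> l < Lp N \<and> m < Lp N \<and> l \<noteq> m \<and> P N l \<subseteq> F \<and> P N m \<subseteq> F
      \<and> P N l \<inter> Z = {} \<and> P N m \<inter> Z = {} \<longrightarrow>
      (measure \<tau> (S \<inter> P N l) = 0 \<and> measure \<tau> (S \<inter> P N m) = 0) \<or>
      (measure \<tau> (P N l - S) = 0 \<and> measure \<tau> (P N m - S) = 0)"
    using fle_pair[where Z=Z, OF fle S inv] by (elim exE conjE) blast
  have pair: "\<And>N l m. NE \<le> N \<Longrightarrow> l < Lp N \<Longrightarrow> m < Lp N \<Longrightarrow> l \<noteq> m \<Longrightarrow> P N l \<subseteq> F \<Longrightarrow> P N m \<subseteq> F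
      \<Longrightarrow> P N l \<inter> Z = {} \<Longrightarrow> P N m \<inter> Z = {} \<Longrightarrow>
      (measure \<tau> (S \<inter> P N l) = 0 \<and> measure \<tau> (S \<inter> P N m) = 0) \<or>
      (measure \<tau> (P N l - S) = 0 \<and> measure \<tau> (P N m - S) = 0)"
    using pair0 by simp
  define c where "c = real (card Z + 1)"
  have bound: "measure \<tau> (S \<inter> F) \<le> c * mx N \<or> measure \<tau> (F - S) \<le> c * mx N" if N: "NE \<le> N" for N
  proof -
    define Lg where "Lg = {l. l < Lp N \<and> P N l \<subseteq> F \<and> P N l \<inter> Z = {}}"
    define Lb where "Lb = {l. l < Lp N \<and> P N l \<subseteq> F \<and> P N l \<inter> Z \<noteq> {}}"
    have finLg: "finite Lg" unfolding Lg_def by auto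
    have finLb: "finite Lb" unfolding Lb_def by auto
    have cover: "F \<subseteq> (\<Union>l\<in>Lg. P N l) \<union> (\<Union>l\<in>Lb. P N l)"
    proof
      fix x assume x: "x \<in> F"
      obtain l where l: "l < Lp N" "x \<in> P N l" using cell_cover by blast
      have "P N l \<subseteq> F" using TN_cells[OF NE N l(1)] x l(2) by blast
      then show "x \<in> (\<Union>l\<in>Lg. P N l) \<union> (\<Union>l\<in>Lb. P N l)" using l unfolding Lg_def Lb_def by blast
    qed
    have cardLb: "card Lb \<le> card Z"
    proof -
      define f where "f l = (SOME p. p \<in> P N l \<inter> Z)" for l
      have fin: "f l \<in> P N l \<inter> Z" if "l \<in> Lb" for l
      proof -
        from that obtain p where "p \<in> P N l \<inter> Z" unfolding Lb_def by blast
        then show ?thesis unfolding f_def by (rule someI)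
      qed
      have "inj_on f Lb"
      proof (rule inj_onI)
        fix l m
        assume lm: "l \<in> Lb" "m \<in> Lb" "f l = f m"
        show "l = m"
        proof (rule ccontr)
          assume "l \<noteq> m"
          then have "P N l \<inter> P N m = {}" using cell_disj[of l N m] lm(1,2) unfolding Lb_def by blast
          moreover have "f l \<in> P N l" "f l \<in> P N m" using fin[OF lm(1)] fin[OF lm(2)] lm(3) by auto
          ultimately show False by blast
        qed
      qed
      moreover have "f ` Lb \<subseteq> Z" using fin by blast
      ultimately show ?thesis by (rule card_inj_on_le[OF _ _ Z])
    qed
    have Lbsets: "(\<lambda>l. P N l) ` Lb \<subseteq> sets \<tau>" using cell_sets unfolding Lb_def by blast
    have Lgsets: "(\<lambda>l. P N l) ` Lg \<subseteq> sets \<tau>" using cell_sets unfolding Lg_def by blast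
    have mLb: "measure \<tau> (\<Union>l\<in>Lb. P N l) \<le> card Z * mx N"
    proof -
      have "measure \<tau> (\<Union>l\<in>Lb. P N l) \<le> (\<Sum>l\<in>Lb. measure \<tau> (P N l))"
        by (rule finite_measure_subadditive_finite[OF finLb Lbsets])
      also have "\<dots> \<le> (\<Sum>l\<in>Lb. mx N)" using mx_ge unfolding Lb_def by (intro sum_mono) auto
      also have "\<dots> = card Lb * mx N" by simp
      also have "\<dots> \<le> card Z * mx N" using cardLb mx_nonneg by (intro mult_right_mono) auto
      finally show ?thesis .
    qed
    have Ubs: "(\<Union>l\<in>Lb. P N l) \<in> sets \<tau>" using Lbsets finLb by blast
    consider (null) "\<forall>l\<in>Lg. measure \<tau> (S \<inter> P N l) = 0" | (full) "\<forall>l\<in>Lg. measure \<tau> (P N l - S) = 0"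
      | (single) l where "Lg \<subseteq> {l}" "l < Lp N"
    proof -
      assume h1: "\<forall>l\<in>Lg. measure \<tau> (S \<inter> P N l) = 0 \<Longrightarrow> thesis"
        and h2: "\<forall>l\<in>Lg. measure \<tau> (P N l - S) = 0 \<Longrightarrow> thesis"
        and h3: "\<And>l. Lg \<subseteq> {l} \<Longrightarrow> l < Lp N \<Longrightarrow> thesis"
      show thesis
      proof (rule ccontr)
        assume nt: "\<not> thesis"
        then obtain l1 where l1: "l1 \<in> Lg" "measure \<tau> (S \<inter> P N l1) \<noteq> 0" using h1 by blast
        obtain l2 where l2: "l2 \<in> Lg" "measure \<tau> (P N l2 - S) \<noteq> 0" using h2 nt by blast
        have "l1 = l2"
        proof (rule ccontr)
          assume "l1 \<noteq> l2"
          then show False using pair[OF N, of l1 l2] l1 l2 unfolding Lg_def by auto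
        qed
        have "Lg \<subseteq> {l1}"
        proof
          fix l' assume l': "l' \<in> Lg"
          show "l' \<in> {l1}"
          proof (rule ccontr)
            assume "l' \<notin> {l1}"
            then show False using pair[OF N, of l1 l'] l1 l2 l' \<open>l1 = l2\<close> unfolding Lg_def by auto
          qed
        qed
        then show False using h3 nt l1 unfolding Lg_def by blast
      qed
    qed
    then show ?thesis
    proof cases
      case null
      have "S \<inter> F \<subseteq> (\<Union>l\<in>Lg. S \<inter> P N l) \<union> (\<Union>l\<in>Lb. P N l)" using cover by blast
      then have "measure \<tau> (S \<inter> F) \<le> measure \<tau> ((\<Union>l\<in>Lg. S \<inter> P N l) \<union> (\<Union>l\<in>Lb. P N l))"
        using Ubs Lgsets S finLg by (intro finite_measure_mono) auto
      also have "\<dots> \<le> measure \<tau> (\<Union>l\<in>Lg. S \<inter> P N l) + measure \<tau> (\<Union>l\<in>Lb. P N l)"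
        using Ubs Lgsets S finLg by (intro measure_Un_le) auto
      also have "measure \<tau> (\<Union>l\<in>Lg. S \<inter> P N l) \<le> (\<Sum>l\<in>Lg. measure \<tau> (S \<inter> P N l))"
        using Lgsets S by (intro finite_measure_subadditive_finite[OF finLg]) auto
      also have "(\<Sum>l\<in>Lg. measure \<tau> (S \<inter> P N l)) = 0" using null by simp
      finally have "measure \<tau> (S \<inter> F) \<le> card Z * mx N" using mLb by linarith
      moreover have "card Z * mx N \<le> c * mx N" unfolding c_def using mx_nonneg[of N] by (intro mult_right_mono) auto
      ultimately show ?thesis by linarith
    next
      case full
      have "F - S \<subseteq> (\<Union>l\<in>Lg. P N l - S) \<union> (\<Union>l\<in>Lb. P N l)" using cover by blast
      then have "measure \<tau> (F - S) \<le> measure \<tau> ((\<Union>l\<in>Lg. P N l - S) \<union> (\<Union>l\<in>Lb. P N l))"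
        using Ubs Lgsets S finLg by (intro finite_measure_mono) auto
      also have "\<dots> \<le> measure \<tau> (\<Union>l\<in>Lg. P N l - S) + measure \<tau> (\<Union>l\<in>Lb. P N l)"
        using Ubs Lgsets S finLg by (intro measure_Un_le) auto
      also have "measure \<tau> (\<Union>l\<in>Lg. P N l - S) \<le> (\<Sum>l\<in>Lg. measure \<tau> (P N l - S))"
        using Lgsets S by (intro finite_measure_subadditive_finite[OF finLg]) auto
      also have "(\<Sum>l\<in>Lg. measure \<tau> (P N l - S)) = 0" using full by simp
      finally have "measure \<tau> (F - S) \<le> card Z * mx N" using mLb by linarith
      moreover have "card Z * mx N \<le> c * mx N" unfolding c_def using mx_nonneg[of N] by (intro mult_right_mono) auto
      ultimately show ?thesis by linarith
    next
      case (single l)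
      have "S \<inter> F \<subseteq> P N l \<union> (\<Union>l\<in>Lb. P N l)" using cover single by blast
      then have "measure \<tau> (S \<inter> F) \<le> measure \<tau> (P N l \<union> (\<Union>l\<in>Lb. P N l))"
        using Ubs cell_sets[OF single(2)] by (intro finite_measure_mono) auto
      also have "\<dots> \<le> measure \<tau> (P N l) + measure \<tau> (\<Union>l\<in>Lb. P N l)"
        using Ubs cell_sets[OF single(2)] by (intro measure_Un_le) auto
      finally have "measure \<tau> (S \<inter> F) \<le> mx N + card Z * mx N" using mLb mx_ge[OF single(2)] by linarith
      then show ?thesis unfolding c_def by (simp add: algebra_simps)
    qed
  qed
  show ?thesis
  proof (rule ccontr)
    assume "\<not> ?thesis"
    then have p1: "measure \<tau> (S \<inter> F) > 0" and p2: "measure \<tau> (F - S) > 0"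
      using measure_nonneg[of \<tau> "S \<inter> F"] measure_nonneg[of \<tau> "F - S"] by linarith+
    define e where "e = min (measure \<tau> (S \<inter> F)) (measure \<tau> (F - S))"
    have e: "e > 0" unfolding e_def using p1 p2 by simp
    have "(\<lambda>N. c * mx N) \<longlonglongrightarrow> c * 0" by (intro tendsto_mult tendsto_const mx_lim)
    then have "eventually (\<lambda>N. c * mx N < e) sequentially"
      using e by (simp add: order_tendstoD(2))
    moreover have "eventually (\<lambda>N. NE \<le> N) sequentially" by (rule eventually_ge_at_top)
    ultimately have "eventually (\<lambda>N. c * mx N < e \<and> NE \<le> N) sequentially" by (rule eventually_conj)
    then obtain N0 where "\<forall>N\<ge>N0. c * mx N < e \<and> NE \<le> N" unfolding eventually_sequentially by blast
    then obtain N where N: "c * mx N < e" "NE \<le> N" by blast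
    from bound[OF N(2)] N(1) show False unfolding e_def by auto
  qed
qed

lemma le_01:
  assumes le: "locally_ergodic \<tau> Lp P G E" and S: "S \<in> sets \<tau>" and Z: "finite Z"
    and inv: "\<forall>g\<in>G. (\<forall>p\<in>Z. g p = p) \<longrightarrow> (\<forall>s. g s \<in> S \<longleftrightarrow> s \<in> S)"
  shows "S \<inter> E \<in> null_sets \<tau> \<or> E - S \<in> null_sets \<tau>"
proof -
  obtain Ej where Ej: "incseq Ej" "\<And>j. Ej j \<subseteq> E" "\<And>j. finite_locally_ergodic \<tau> Lp P G (Ej j)"
    "(\<Union>j. Ej j) = E"
    using le unfolding locally_ergodic_def by blast
  have Ejs: "Ej j \<in> sets \<tau>" for j using Ej(3) unfolding finite_locally_ergodic_def by blast
  have d: "measure \<tau> (S \<inter> Ej j) = 0 \<or> measure \<tau> (Ej j - S) = 0" for j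
    by (rule fle_01[where Z=Z, OF Ej(3) S Z inv])
  show ?thesis
  proof (cases "\<forall>j. measure \<tau> (S \<inter> Ej j) = 0")
    case True
    then have "(\<Union>j. S \<inter> Ej j) \<in> null_sets \<tau>"
      using S Ejs by (intro null_sets_UN null_of_measure0) auto
    moreover have "(\<Union>j. S \<inter> Ej j) = S \<inter> E" using Ej(4) by blast
    ultimately show ?thesis by simp
  next
    case False
    then obtain j0 where j0: "measure \<tau> (S \<inter> Ej j0) \<noteq> 0" by blast
    have "Ej j - S \<in> null_sets \<tau>" for j
    proof (cases "j0 \<le> j")
      case True
      have "measure \<tau> (S \<inter> Ej j0) \<le> measure \<tau> (S \<inter> Ej j)"
        using Ej(1) True S Ejs by (intro finite_measure_mono) (auto simp: incseq_def)
      then have "measure \<tau> (S \<inter> Ej j) \<noteq> 0" using j0 measure_nonneg[of \<tau> "S \<inter> Ej j0"] by linarith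
      then show ?thesis using d[of j] S Ejs by (intro null_of_measure0) auto
    next
      case False
      have "measure \<tau> (S \<inter> Ej j0) \<noteq> 0" by (rule j0)
      then have n0: "Ej j0 - S \<in> null_sets \<tau>" using d[of j0] S Ejs by (intro null_of_measure0) auto
      have "j \<le> j0" using False by simp
      then have "Ej j \<subseteq> Ej j0" using Ej(1) unfolding incseq_def by blast
      then have "Ej j - S \<subseteq> Ej j0 - S" by blast
      then show ?thesis using null_sets_subset[OF n0] S Ejs by auto
    qed
    then have "(\<Union>j. Ej j - S) \<in> null_sets \<tau>" by (intro null_sets_UN)
    moreover have "(\<Union>j. Ej j - S) = E - S" using Ej(4) by blast
    ultimately show ?thesis by simp
  qed
qed

end

locale main_setting = pf_setting \<tau> Lp P G for \<tau> :: "'t measure" and Lp P G +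
  fixes \<rho> :: "'r measure" and n K :: nat and E :: "nat \<Rightarrow> 't set"
  assumes sfr: "sigma_finite_measure \<rho>"
    and Es: "\<forall>i<K. E i \<in> sets \<tau>" and Edisj: "disjoint_family_on E {..<K}"
    and Ele: "\<forall>i<K. locally_ergodic \<tau> Lp P G (E i)"
begin

abbreviation "N1 \<equiv> \<tau> \<Otimes>\<^sub>M \<rho>"
abbreviation "M \<equiv> (\<Pi>\<^sub>M i\<in>{..<n}. N1)"

definition upd :: "nat \<Rightarrow> 't \<Rightarrow> (nat \<Rightarrow> 't \<times> 'r) \<Rightarrow> (nat \<Rightarrow> 't \<times> 'r)" where
  "upd m s \<omega> = fun_upd \<omega> m (s, snd (\<omega> m))"

lemma sf_tau: "sigma_finite_measure \<tau>" by unfold_locales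

lemma sf_N1: "sigma_finite_measure N1"
  by (rule sigma_finite_pair_measure[OF sf_tau sfr])

lemma psf: "product_sigma_finite (\<lambda>_. N1)"
  unfolding product_sigma_finite_def using sf_N1 by blast

lemma sf_M: "sigma_finite_measure M"
  by (rule product_sigma_finite.sigma_finite[OF psf]) simp

lemma pair_M_tau: "pair_sigma_finite M \<tau>"
  unfolding pair_sigma_finite_def using sf_M sf_tau by blast

lemma pair_tau_rho: "pair_sigma_finite \<tau> \<rho>"
  unfolding pair_sigma_finite_def using sfr sf_tau by blast

lemma space_N1: "space N1 = UNIV \<times> space \<rho>"
  by (simp add: space_pair_measure spc)

lemma space_M: "space M = (\<Pi>\<^sub>E i\<in>{..<n}. UNIV \<times> space \<rho>)"
  by (simp add: space_PiM space_N1)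

lemma upd_space: "\<omega> \<in> space M \<Longrightarrow> m < n \<Longrightarrow> upd m s \<omega> \<in> space M"
proof -
  assume w: "\<omega> \<in> space M" and m: "m < n"
  then have "\<omega> m \<in> UNIV \<times> space \<rho>" unfolding space_M by auto
  then have "snd (\<omega> m) \<in> space \<rho>" by auto
  then show ?thesis using w m unfolding space_M upd_def by (auto simp: PiE_iff extensional_def)
qed

lemma upd_upd[simp]: "upd m s (upd m s' \<omega>) = upd m s \<omega>"
  unfolding upd_def by auto

lemma upd_comm: "m \<noteq> i \<Longrightarrow> upd m s (upd i s' \<omega>) = upd i s' (upd m s \<omega>)"
  unfolding upd_def by (auto simp: fun_upd_twist)

lemma fst_upd[simp]: "fst (upd m s \<omega> m) = s"
  unfolding upd_def by simp

lemma fst_upd_other[simp]: "i \<noteq> m \<Longrightarrow> upd m s \<omega> i = \<omega> i"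
  unfolding upd_def by simp

lemma upd_measurable: "m < n \<Longrightarrow> (\<lambda>(\<omega>, s). upd m s \<omega>) \<in> measurable (M \<Otimes>\<^sub>M \<tau>) M"
proof -
  assume m: "m < n"
  have eq: "(\<lambda>(\<omega>, s). upd m s \<omega>) = (\<lambda>p i. (\<lambda>i p. if i = m then (snd p, snd (fst p m)) else fst p i) i p)"
    by (rule ext, clarsimp simp: upd_def fun_eq_iff)
  show ?thesis unfolding eq
  proof (rule measurable_PiM_single')
    fix i assume i: "i \<in> {..<n}"
    show "(\<lambda>p. if i = m then (snd p, snd (fst p m)) else fst p i) \<in> measurable (M \<Otimes>\<^sub>M \<tau>) N1"
    proof (cases "i = m")
      case True
      have c: "(\<lambda>p. snd (fst p m)) \<in> measurable (M \<Otimes>\<^sub>M \<tau>) \<rho>"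
      proof -
        have c1: "(\<lambda>p. fst p m) \<in> measurable (M \<Otimes>\<^sub>M \<tau>) N1"
          by (rule measurable_compose[OF measurable_fst measurable_component_singleton]) (use m in simp)
        show ?thesis using measurable_compose[OF c1 measurable_snd] by simp
      qed
      have "(\<lambda>p. (snd p, snd (fst p m))) \<in> measurable (M \<Otimes>\<^sub>M \<tau>) N1"
        by (rule measurable_Pair[OF measurable_snd c])
      then show ?thesis using True by simp
    next
      case False
      have "(\<lambda>p. fst p i) \<in> measurable (M \<Otimes>\<^sub>M \<tau>) N1"
        by (rule measurable_compose[OF measurable_fst measurable_component_singleton]) (use i in simp)
      then show ?thesis using False by simp
    qed
  next
    show "(\<lambda>p i. if i = m then (snd p, snd (fst p m)) else fst p i) \<in> space (M \<Otimes>\<^sub>M \<tau>) \<rightarrow> (\<Pi>\<^sub>E i\<in>{..<n}. space N1)"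
    proof
      fix p assume p: "p \<in> space (M \<Otimes>\<^sub>M \<tau>)"
      then have "fst p \<in> space M" by (auto simp: space_pair_measure)
      then have "upd m (snd p) (fst p) \<in> space M" using upd_space m by blast
      moreover have "upd m (snd p) (fst p) = (\<lambda>i. if i = m then (snd p, snd (fst p m)) else fst p i)"
        unfolding upd_def by (rule ext) simp
      ultimately show "(\<lambda>i. if i = m then (snd p, snd (fst p m)) else fst p i) \<in> (\<Pi>\<^sub>E i\<in>{..<n}. space N1)"
        by (simp add: space_PiM)
    qed
  qed
qed

lemma upd_measurable1: "m < n \<Longrightarrow> \<omega> \<in> space M \<Longrightarrow> (\<lambda>s. upd m s \<omega>) \<in> measurable \<tau> M"
proof -
  assume m: "m < n" and w: "\<omega> \<in> space M"
  have "(\<lambda>s. (\<lambda>(\<omega>, s). upd m s \<omega>) (\<omega>, s)) \<in> measurable \<tau> M"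
    using measurable_compose[OF measurable_Pair1'[OF w] upd_measurable[OF m]] by simp
  then show ?thesis by simp
qed

end

context main_setting begin

lemma fst_comp_meas: "m < n \<Longrightarrow> (\<lambda>\<omega>. fst (\<omega> m)) \<in> measurable M \<tau>"
proof -
  assume m: "m < n"
  have "(\<lambda>\<omega>. \<omega> m) \<in> measurable M N1" by (rule measurable_component_singleton) (use m in simp)
  from measurable_compose[OF this measurable_fst] show ?thesis by simp
qed

lemma distr_upd: assumes m: "m < n" shows "distr (M \<Otimes>\<^sub>M \<tau>) M (\<lambda>(\<omega>, s). upd m s \<omega>) = M"
proof -
  interpret P: product_sigma_finite "\<lambda>_. N1" by (rule psf)
  interpret TR: pair_sigma_finite \<tau> \<rho> by (rule pair_tau_rho)
  have Um: "(\<lambda>(\<omega>, s). upd m s \<omega>) \<in> measurable (M \<Otimes>\<^sub>M \<tau>) M" by (rule upd_measurable[OF m])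
  show ?thesis
  proof (rule P.PiM_eqI)
    show "finite {..<n}" by simp
    show "sets (distr (M \<Otimes>\<^sub>M \<tau>) M (\<lambda>(\<omega>, s). upd m s \<omega>)) = sets M" by simp
  next
    fix A assume A: "\<And>i. i \<in> {..<n} \<Longrightarrow> A i \<in> sets N1"
    have PA: "(\<Pi>\<^sub>E i\<in>{..<n}. A i) \<in> sets M" using A by (intro sets_PiM_I_finite) auto
    define X where "X = (\<lambda>(\<omega>, s). upd m s \<omega>) -` (\<Pi>\<^sub>E i\<in>{..<n}. A i) \<inter> space (M \<Otimes>\<^sub>M \<tau>)"
    have Xs: "X \<in> sets (M \<Otimes>\<^sub>M \<tau>)" unfolding X_def using Um PA by (rule measurable_sets)
    define g where "g y = emeasure \<tau> ((\<lambda>x. (x, y)) -` A m)" for y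
    define f where "f j = (if j = m then (\<lambda>p. g (snd p)) else indicator (A j))" for j
    have gm: "g \<in> borel_measurable \<rho>" unfolding g_def using A m by (intro TR.measurable_emeasure_Pair2) auto
    have fm: "f j \<in> borel_measurable N1" if "j \<in> {..<n}" for j
    proof (cases "j = m")
      case True
      then show ?thesis unfolding f_def using measurable_compose[OF measurable_snd[of \<tau> \<rho>] gm] by simp
    next
      case False
      then show ?thesis unfolding f_def using A that by simp
    qed
    have sec: "emeasure \<tau> (Pair \<omega> -` X) = (\<Prod>j\<in>{..<n}. f j (\<omega> j))" if w: "\<omega> \<in> space M" for \<omega>
    proof -
      have ext: "\<omega> \<in> extensional {..<n}" using w unfolding space_M by (simp add: PiE_iff)
      have eqset: "Pair \<omega> -` X = (if (\<forall>j\<in>{..<n}-{m}. \<omega> j \<in> A j) then (\<lambda>x. (x, snd (\<omega> m))) -` A m else {})"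
      proof -
        have "upd m s \<omega> \<in> (\<Pi>\<^sub>E i\<in>{..<n}. A i) \<longleftrightarrow> (\<forall>j\<in>{..<n}-{m}. \<omega> j \<in> A j) \<and> (s, snd (\<omega> m)) \<in> A m" for s
        proof -
          have e2: "upd m s \<omega> \<in> extensional {..<n}" using ext m unfolding upd_def extensional_def by auto
          have "upd m s \<omega> \<in> (\<Pi>\<^sub>E i\<in>{..<n}. A i) \<longleftrightarrow> (\<forall>j\<in>{..<n}. upd m s \<omega> j \<in> A j)"
            using e2 by (simp add: PiE_iff)
          also have "\<dots> \<longleftrightarrow> (\<forall>j\<in>{..<n}-{m}. \<omega> j \<in> A j) \<and> (s, snd (\<omega> m)) \<in> A m"
            using m unfolding upd_def by auto
          finally show ?thesis .
        qed
        moreover have "(\<omega>, s) \<in> space (M \<Otimes>\<^sub>M \<tau>)" for s using w by (simp add: space_pair_measure spc)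
        ultimately show ?thesis unfolding X_def by auto
      qed
      have "(\<Prod>j\<in>{..<n}. f j (\<omega> j)) = f m (\<omega> m) * (\<Prod>j\<in>{..<n}-{m}. f j (\<omega> j))"
        using m by (subst prod.remove[of _ m]) auto
      also have "(\<Prod>j\<in>{..<n}-{m}. f j (\<omega> j)) = (\<Prod>j\<in>{..<n}-{m}. indicator (A j) (\<omega> j))"
        unfolding f_def by (intro prod.cong) auto
      also have "\<dots> = (if (\<forall>j\<in>{..<n}-{m}. \<omega> j \<in> A j) then 1 else 0)"
      proof (cases "\<forall>j\<in>{..<n}-{m}. \<omega> j \<in> A j")
        case True
        then have "(\<Prod>j\<in>{..<n}-{m}. indicator (A j) (\<omega> j)) = (\<Prod>j\<in>{..<n}-{m}. (1::ennreal))"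
          by (intro prod.cong) (auto simp: indicator_def)
        then show ?thesis using True by simp
      next
        case False
        then obtain j where j: "j \<in> {..<n}-{m}" "\<omega> j \<notin> A j" by blast
        have "(\<Prod>j\<in>{..<n}-{m}. indicator (A j) (\<omega> j)) = (0::ennreal)"
          using j by (intro prod_zero) (auto simp: indicator_def)
        then show ?thesis using False by simp
      qed
      finally show ?thesis unfolding eqset f_def g_def by simp
    qed
    have "emeasure (distr (M \<Otimes>\<^sub>M \<tau>) M (\<lambda>(\<omega>, s). upd m s \<omega>)) (\<Pi>\<^sub>E i\<in>{..<n}. A i) = emeasure (M \<Otimes>\<^sub>M \<tau>) X"
      unfolding X_def by (rule emeasure_distr[OF Um PA])
    also have "\<dots> = (\<integral>\<^sup>+\<omega>. emeasure \<tau> (Pair \<omega> -` X) \<partial>M)"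
      by (rule sigma_finite_measure.emeasure_pair_measure_alt[OF sf_tau Xs])
    also have "\<dots> = (\<integral>\<^sup>+\<omega>. (\<Prod>j\<in>{..<n}. f j (\<omega> j)) \<partial>M)"
      by (intro nn_integral_cong sec)
    also have "\<dots> = (\<Prod>j\<in>{..<n}. integral\<^sup>N N1 (f j))"
      by (rule P.product_nn_integral_prod) (auto intro: fm)
    also have "\<dots> = (\<Prod>j\<in>{..<n}. emeasure N1 (A j))"
    proof (rule prod.cong[OF refl])
      fix j assume j: "j \<in> {..<n}"
      show "integral\<^sup>N N1 (f j) = emeasure N1 (A j)"
      proof (cases "j = m")
        case True
        have h: "(\<lambda>p. g (snd p)) \<in> borel_measurable N1" using measurable_compose[OF measurable_snd[of \<tau> \<rho>] gm] by simp
        have "integral\<^sup>N N1 (f j) = (\<integral>\<^sup>+ y. (\<integral>\<^sup>+ x. g (snd (x, y)) \<partial>\<tau>) \<partial>\<rho>)"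
          unfolding f_def using True TR.nn_integral_snd[OF h] by simp
        also have "\<dots> = (\<integral>\<^sup>+ y. g y \<partial>\<rho>)" by (simp add: emeasure_space_1)
        also have "\<dots> = emeasure N1 (A m)" unfolding g_def
          using TR.emeasure_pair_measure_alt2[of "A m"] A m by simp
        finally show ?thesis using True by simp
      next
        case False
        then show ?thesis unfolding f_def using A j by simp
      qed
    qed
    finally show "emeasure (distr (M \<Otimes>\<^sub>M \<tau>) M (\<lambda>(\<omega>, s). upd m s \<omega>)) (\<Pi>\<^sub>E i\<in>{..<n}. A i) = (\<Prod>j\<in>{..<n}. emeasure N1 (A j))" .
  qed
qed

end

context main_setting begin

definition Qset :: "nat \<Rightarrow> 't set \<Rightarrow> (nat \<Rightarrow> 't \<times> 'r) set \<Rightarrow> ((nat \<Rightarrow> 't \<times> 'r) \<times> 't) set" where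
  "Qset m A Y = ((\<lambda>(\<omega>, s). upd m s \<omega>) -` Y \<inter> space (M \<Otimes>\<^sub>M \<tau>)) \<inter> (space M \<times> A)"

lemma Qset_sets: "m < n \<Longrightarrow> Y \<in> sets M \<Longrightarrow> A \<in> sets \<tau> \<Longrightarrow> Qset m A Y \<in> sets (M \<Otimes>\<^sub>M \<tau>)"
  unfolding Qset_def
  by (intro sets.Int measurable_sets[OF upd_measurable] pair_measureI) auto

lemma Qset_sec: "\<omega> \<in> space M \<Longrightarrow> Pair \<omega> -` Qset m A Y = {s\<in>A. upd m s \<omega> \<in> Y}"
  unfolding Qset_def by (auto simp: space_pair_measure spc)

lemma sec_meas:
  assumes m: "m < n" and Y: "Y \<in> sets M" and A: "A \<in> sets \<tau>"
  shows "(\<lambda>\<omega>. emeasure \<tau> {s\<in>A. upd m s \<omega> \<in> Y}) \<in> borel_measurable M"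
proof -
  have "(\<lambda>\<omega>. emeasure \<tau> (Pair \<omega> -` Qset m A Y)) \<in> borel_measurable M"
    by (rule sigma_finite_measure.measurable_emeasure_Pair[OF sf_tau Qset_sets[OF m Y A]])
  moreover have "\<And>\<omega>. \<omega> \<in> space M \<Longrightarrow> emeasure \<tau> (Pair \<omega> -` Qset m A Y) = emeasure \<tau> {s\<in>A. upd m s \<omega> \<in> Y}"
    by (simp add: Qset_sec)
  ultimately show ?thesis using measurable_cong by (smt (verit))
qed

lemma sec_sets: "m < n \<Longrightarrow> \<omega> \<in> space M \<Longrightarrow> Y \<in> sets M \<Longrightarrow> {s. upd m s \<omega> \<in> Y} \<in> sets \<tau>"
proof -
  assume m: "m < n" and w: "\<omega> \<in> space M" and Y: "Y \<in> sets M"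
  have "(\<lambda>s. upd m s \<omega>) -` Y \<inter> space \<tau> \<in> sets \<tau>" by (rule measurable_sets[OF upd_measurable1[OF m w] Y])
  then show ?thesis by (simp add: spc vimage_def)
qed

lemma UF:
  assumes m: "m < n" and Y: "Y \<in> sets M" and A: "A \<in> sets \<tau>"
  shows "emeasure M {\<omega>\<in>Y. fst (\<omega> m) \<in> A} = (\<integral>\<^sup>+\<omega>. emeasure \<tau> {s\<in>A. upd m s \<omega> \<in> Y} \<partial>M)"
proof -
  have Um: "(\<lambda>(\<omega>, s). upd m s \<omega>) \<in> measurable (M \<Otimes>\<^sub>M \<tau>) M" by (rule upd_measurable[OF m])
  have Y'eq: "{\<omega>\<in>Y. fst (\<omega> m) \<in> A} = Y \<inter> ((\<lambda>\<omega>. fst (\<omega> m)) -` A \<inter> space M)"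
    using sets.sets_into_space[OF Y] by blast
  have Y's: "{\<omega>\<in>Y. fst (\<omega> m) \<in> A} \<in> sets M"
    unfolding Y'eq by (intro sets.Int Y measurable_sets[OF fst_comp_meas[OF m] A])
  have "emeasure M {\<omega>\<in>Y. fst (\<omega> m) \<in> A} = emeasure (distr (M \<Otimes>\<^sub>M \<tau>) M (\<lambda>(\<omega>, s). upd m s \<omega>)) {\<omega>\<in>Y. fst (\<omega> m) \<in> A}"
    by (simp add: distr_upd[OF m])
  also have "\<dots> = emeasure (M \<Otimes>\<^sub>M \<tau>) ((\<lambda>(\<omega>, s). upd m s \<omega>) -` {\<omega>\<in>Y. fst (\<omega> m) \<in> A} \<inter> space (M \<Otimes>\<^sub>M \<tau>))"
    by (rule emeasure_distr[OF Um Y's])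
  also have "((\<lambda>(\<omega>, s). upd m s \<omega>) -` {\<omega>\<in>Y. fst (\<omega> m) \<in> A} \<inter> space (M \<Otimes>\<^sub>M \<tau>)) = Qset m A Y"
    unfolding Qset_def by (auto simp: space_pair_measure)
  also have "emeasure (M \<Otimes>\<^sub>M \<tau>) (Qset m A Y) = (\<integral>\<^sup>+\<omega>. emeasure \<tau> (Pair \<omega> -` Qset m A Y) \<partial>M)"
    by (rule sigma_finite_measure.emeasure_pair_measure_alt[OF sf_tau Qset_sets[OF m Y A]])
  also have "\<dots> = (\<integral>\<^sup>+\<omega>. emeasure \<tau> {s\<in>A. upd m s \<omega> \<in> Y} \<partial>M)"
    by (intro nn_integral_cong) (simp add: Qset_sec)
  finally show ?thesis .
qed

lemma UF_null1:
  assumes m: "m < n" and Y: "Y \<in> null_sets M"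
  shows "AE \<omega> in M. emeasure \<tau> {s. upd m s \<omega> \<in> Y} = 0"
proof -
  have Ys: "Y \<in> sets M" using Y by auto
  have "emeasure M {\<omega>\<in>Y. fst (\<omega> m) \<in> UNIV} = 0" using Y by auto
  then have "(\<integral>\<^sup>+\<omega>. emeasure \<tau> {s\<in>UNIV. upd m s \<omega> \<in> Y} \<partial>M) = 0"
    using UF[OF m Ys, of UNIV] spc by (metis sets.top)
  then have "AE \<omega> in M. emeasure \<tau> {s\<in>UNIV. upd m s \<omega> \<in> Y} = 0"
    using nn_integral_0_iff_AE[OF sec_meas[OF m Ys, of UNIV]] spc by (metis sets.top)
  then show ?thesis by simp
qed

lemma UF_null2:
  assumes m: "m < n" and Y: "Y \<in> sets M" and A: "A \<in> sets \<tau>"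
    and ae: "AE \<omega> in M. emeasure \<tau> {s\<in>A. upd m s \<omega> \<in> Y} = 0"
  shows "{\<omega>\<in>Y. fst (\<omega> m) \<in> A} \<in> null_sets M"
proof -
  have Y'eq: "{\<omega>\<in>Y. fst (\<omega> m) \<in> A} = Y \<inter> ((\<lambda>\<omega>. fst (\<omega> m)) -` A \<inter> space M)"
    using sets.sets_into_space[OF Y] by blast
  have Y's: "{\<omega>\<in>Y. fst (\<omega> m) \<in> A} \<in> sets M"
    unfolding Y'eq by (intro sets.Int Y measurable_sets[OF fst_comp_meas[OF m] A])
  have "(\<integral>\<^sup>+\<omega>. emeasure \<tau> {s\<in>A. upd m s \<omega> \<in> Y} \<partial>M) = 0"
    using nn_integral_0_iff_AE[OF sec_meas[OF m Y A]] ae by simp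
  then have "emeasure M {\<omega>\<in>Y. fst (\<omega> m) \<in> A} = 0" using UF[OF m Y A] by simp
  then show ?thesis using Y's by (simp add: null_sets_def)
qed

end

context main_setting begin

lemma Edisj_pt: "k < K \<Longrightarrow> k' < K \<Longrightarrow> x \<in> E k \<Longrightarrow> x \<in> E k' \<Longrightarrow> k = k'"
  using Edisj unfolding disjoint_family_on_def by blast

lemma gn_upd:
  assumes w: "\<omega> \<in> space M" and m: "m < n" and gfix: "\<forall>j<n. j \<noteq> m \<longrightarrow> g (fst (\<omega> j)) = fst (\<omega> j)"
  shows "gn g n (upd m s \<omega>) = upd m (g s) \<omega>"
proof (rule ext)
  fix i
  have ext: "\<omega> \<in> extensional {..<n}" using w unfolding space_M by (simp add: PiE_iff)
  show "gn g n (upd m s \<omega>) i = upd m (g s) \<omega> i"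
  proof (cases "i < n")
    case True
    show ?thesis
    proof (cases "i = m")
      case True
      then show ?thesis using m unfolding gn_def upd_def by simp
    next
      case False
      then have "g (fst (\<omega> i)) = fst (\<omega> i)" using gfix \<open>i < n\<close> by blast
      then show ?thesis using False \<open>i < n\<close> unfolding gn_def upd_def by simp
    qed
  next
    case False
    then have "\<omega> i = undefined" using ext unfolding extensional_def by simp
    then show ?thesis using False m unfolding gn_def upd_def by simp
  qed
qed

lemma core:
  assumes B: "B \<in> invariant_sets M ((\<lambda>g. gn g n) ` G)" and m: "m < n" and w: "\<omega> \<in> space M" and k: "k < K"
  shows "{s\<in>E k. upd m s \<omega> \<in> B} \<in> null_sets \<tau> \<or> E k - {s. upd m s \<omega> \<in> B} \<in> null_sets \<tau>"
proof -
  have Bs: "B \<in> sets M" and Binv: "\<And>g. g \<in> G \<Longrightarrow> B = gn g n -` B \<inter> space M"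
    using B unfolding invariant_sets_def by auto
  define S where "S = {s. upd m s \<omega> \<in> B}"
  have S: "S \<in> sets \<tau>" unfolding S_def by (rule sec_sets[OF m w Bs])
  define Z where "Z = (\<lambda>j. fst (\<omega> j)) ` ({..<n} - {m})"
  have Z: "finite Z" unfolding Z_def by simp
  have inv: "\<forall>g\<in>G. (\<forall>p\<in>Z. g p = p) \<longrightarrow> (\<forall>s. g s \<in> S \<longleftrightarrow> s \<in> S)"
  proof (intro ballI impI allI)
    fix g s assume g: "g \<in> G" and gz: "\<forall>p\<in>Z. g p = p"
    have gfix: "\<forall>j<n. j \<noteq> m \<longrightarrow> g (fst (\<omega> j)) = fst (\<omega> j)" using gz unfolding Z_def by blast
    have us: "upd m s \<omega> \<in> space M" by (rule upd_space[OF w m])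
    have "upd m s \<omega> \<in> B \<longleftrightarrow> upd m s \<omega> \<in> gn g n -` B \<inter> space M" using Binv[OF g] by blast
    also have "\<dots> \<longleftrightarrow> gn g n (upd m s \<omega>) \<in> B" using us by blast
    also have "gn g n (upd m s \<omega>) = upd m (g s) \<omega>" by (rule gn_upd[OF w m gfix])
    finally show "g s \<in> S \<longleftrightarrow> s \<in> S" unfolding S_def by simp
  qed
  have le: "locally_ergodic \<tau> Lp P G (E k)" using Ele k by blast
  have "S \<inter> E k \<in> null_sets \<tau> \<or> E k - S \<in> null_sets \<tau>" by (rule le_01[OF le S Z inv])
  moreover have "S \<inter> E k = {s\<in>E k. upd m s \<omega> \<in> B}" unfolding S_def by blast
  ultimately show ?thesis unfolding S_def by simp
qed

definition Ucl :: "'t set" where "Ucl = UNIV - (\<Union>k<K. E k)"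

lemma Ucl_sets: "Ucl \<in> sets \<tau>"
proof -
  have "(\<Union>k<K. E k) \<in> sets \<tau>" using Es by auto
  then have "space \<tau> - (\<Union>k<K. E k) \<in> sets \<tau>" by auto
  then show ?thesis unfolding Ucl_def spc .
qed

definition Avg :: "nat \<Rightarrow> (nat \<Rightarrow> 't \<times> 'r) set \<Rightarrow> (nat \<Rightarrow> 't \<times> 'r) set" where
  "Avg m X = (X \<inter> {\<omega>\<in>space M. fst (\<omega> m) \<in> Ucl}) \<union>
     (\<Union>k<K. {\<omega>\<in>space M. fst (\<omega> m) \<in> E k \<and> emeasure \<tau> {s\<in>E k. upd m s \<omega> \<in> X} \<noteq> 0})"

lemma Avg_space: "Avg m X \<subseteq> space M" if "X \<subseteq> space M"
  using that unfolding Avg_def by blast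

lemma Avg_U: "\<omega> \<in> space M \<Longrightarrow> fst (\<omega> m) \<in> Ucl \<Longrightarrow> (\<omega> \<in> Avg m X \<longleftrightarrow> \<omega> \<in> X)"
  unfolding Avg_def Ucl_def by blast

lemma Avg_E: "\<omega> \<in> space M \<Longrightarrow> k < K \<Longrightarrow> fst (\<omega> m) \<in> E k \<Longrightarrow>
   (\<omega> \<in> Avg m X \<longleftrightarrow> emeasure \<tau> {s\<in>E k. upd m s \<omega> \<in> X} \<noteq> 0)"
proof -
  assume w: "\<omega> \<in> space M" and k: "k < K" and e: "fst (\<omega> m) \<in> E k"
  have nu: "fst (\<omega> m) \<notin> Ucl" using e k unfolding Ucl_def by blast
  have "\<omega> \<in> Avg m X \<longleftrightarrow> (\<exists>k'<K. fst (\<omega> m) \<in> E k' \<and> emeasure \<tau> {s\<in>E k'. upd m s \<omega> \<in> X} \<noteq> 0)"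
    using nu w unfolding Avg_def by blast
  also have "\<dots> \<longleftrightarrow> emeasure \<tau> {s\<in>E k. upd m s \<omega> \<in> X} \<noteq> 0"
  proof
    assume "\<exists>k'<K. fst (\<omega> m) \<in> E k' \<and> emeasure \<tau> {s\<in>E k'. upd m s \<omega> \<in> X} \<noteq> 0"
    then obtain k' where k': "k' < K" "fst (\<omega> m) \<in> E k'" "emeasure \<tau> {s\<in>E k'. upd m s \<omega> \<in> X} \<noteq> 0" by blast
    then have "k' = k" using Edisj_pt[OF k'(1) k k'(2) e] by blast
    then show "emeasure \<tau> {s\<in>E k. upd m s \<omega> \<in> X} \<noteq> 0" using k'(3) by simp
  next
    assume "emeasure \<tau> {s\<in>E k. upd m s \<omega> \<in> X} \<noteq> 0"
    then show "\<exists>k'<K. fst (\<omega> m) \<in> E k' \<and> emeasure \<tau> {s\<in>E k'. upd m s \<omega> \<in> X} \<noteq> 0" using k e by blast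
  qed
  finally show ?thesis .
qed

lemma Avg_sets: assumes m: "m < n" and X: "X \<in> sets M" shows "Avg m X \<in> sets M"
proof -
  have f: "(\<lambda>\<omega>. fst (\<omega> m)) \<in> measurable M \<tau>" by (rule fst_comp_meas[OF m])
  have U: "{\<omega>\<in>space M. fst (\<omega> m) \<in> Ucl} \<in> sets M"
  proof -
    have "{\<omega>\<in>space M. fst (\<omega> m) \<in> Ucl} = (\<lambda>\<omega>. fst (\<omega> m)) -` Ucl \<inter> space M" by blast
    then show ?thesis using measurable_sets[OF f Ucl_sets] by simp
  qed
  have k: "{\<omega>\<in>space M. fst (\<omega> m) \<in> E k \<and> emeasure \<tau> {s\<in>E k. upd m s \<omega> \<in> X} \<noteq> 0} \<in> sets M" if k: "k < K" for k
  proof -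
    have Ek: "E k \<in> sets \<tau>" using Es k by blast
    have g: "(\<lambda>\<omega>. emeasure \<tau> {s\<in>E k. upd m s \<omega> \<in> X}) \<in> borel_measurable M" by (rule sec_meas[OF m X Ek])
    have o: "UNIV - {0::ennreal} \<in> sets borel" by auto
    have "{\<omega>\<in>space M. fst (\<omega> m) \<in> E k \<and> emeasure \<tau> {s\<in>E k. upd m s \<omega> \<in> X} \<noteq> 0} =
      ((\<lambda>\<omega>. fst (\<omega> m)) -` E k \<inter> space M) \<inter> ((\<lambda>\<omega>. emeasure \<tau> {s\<in>E k. upd m s \<omega> \<in> X}) -` (UNIV - {0}) \<inter> space M)"
      by (auto simp: vimage_def)
    then show ?thesis using measurable_sets[OF f Ek] measurable_sets[OF g o] by simp
  qed
  show ?thesis unfolding Avg_def using X U k by (intro sets.Un sets.Int sets.finite_UN) auto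
qed

end

context main_setting begin

definition Prop01 :: "(nat \<Rightarrow> 't \<times> 'r) set \<Rightarrow> nat \<Rightarrow> (nat \<Rightarrow> 't \<times> 'r) \<Rightarrow> nat \<Rightarrow> bool" where
  "Prop01 X m \<omega> k \<longleftrightarrow> {s\<in>E k. upd m s \<omega> \<in> X} \<in> null_sets \<tau> \<or> E k - {s. upd m s \<omega> \<in> X} \<in> null_sets \<tau>"

lemma cls_cases: "x \<in> Ucl \<or> (\<exists>k<K. x \<in> E k)"
  unfolding Ucl_def by blast

lemma avg_ae:
  assumes m: "m < n" and X: "X \<in> sets M" and ae: "AE \<omega> in M. \<forall>k<K. Prop01 X m \<omega> k"
  shows "(X - Avg m X) \<union> (Avg m X - X) \<in> null_sets M"
proof -
  define D where "D = (X - Avg m X) \<union> (Avg m X - X)"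
  have Ds: "D \<in> sets M" unfolding D_def using X Avg_sets[OF m X] by auto
  have Xsp: "X \<subseteq> space M" using sets.sets_into_space[OF X] .
  have Dsp: "D \<subseteq> space M" using Ds sets.sets_into_space by blast
  have Zk: "{\<omega>\<in>D. fst (\<omega> m) \<in> E k} \<in> null_sets M" if k: "k < K" for k
  proof -
    have Ek: "E k \<in> sets \<tau>" using Es k by blast
    have "AE \<omega> in M. emeasure \<tau> {s\<in>E k. upd m s \<omega> \<in> D} = 0"
      using ae
    proof (rule AE_mp)
      show "AE \<omega> in M. (\<forall>k<K. Prop01 X m \<omega> k) \<longrightarrow> emeasure \<tau> {s\<in>E k. upd m s \<omega> \<in> D} = 0"
      proof (rule AE_I2, rule impI)
        fix \<omega> assume w: "\<omega> \<in> space M" and h: "\<forall>k<K. Prop01 X m \<omega> k"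
        define f where "f = emeasure \<tau> {s\<in>E k. upd m s \<omega> \<in> X}"
        have secX: "{s\<in>E k. upd m s \<omega> \<in> X} \<in> sets \<tau>"
        proof -
          have "{s\<in>E k. upd m s \<omega> \<in> X} = E k \<inter> {s. upd m s \<omega> \<in> X}" by blast
          then show ?thesis using sec_sets[OF m w X] Ek by simp
        qed
        have memD: "upd m s \<omega> \<in> D \<longleftrightarrow> (upd m s \<omega> \<in> X \<longleftrightarrow> f = 0)" if s: "s \<in> E k" for s
        proof -
          have us: "upd m s \<omega> \<in> space M" by (rule upd_space[OF w m])
          have "upd m s \<omega> \<in> Avg m X \<longleftrightarrow> emeasure \<tau> {s'\<in>E k. upd m s' (upd m s \<omega>) \<in> X} \<noteq> 0"
            by (rule Avg_E[OF us k]) (simp add: s)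
          then have "upd m s \<omega> \<in> Avg m X \<longleftrightarrow> f \<noteq> 0" unfolding f_def by simp
          then show ?thesis unfolding D_def by blast
        qed
        show "emeasure \<tau> {s\<in>E k. upd m s \<omega> \<in> D} = 0"
        proof (cases "f = 0")
          case True
          then have "{s\<in>E k. upd m s \<omega> \<in> D} = {s\<in>E k. upd m s \<omega> \<in> X}" using memD by blast
          then show ?thesis using True unfolding f_def by simp
        next
          case False
          then have "{s\<in>E k. upd m s \<omega> \<in> X} \<notin> null_sets \<tau>" unfolding f_def by (simp add: null_sets_def)
          then have n0: "E k - {s. upd m s \<omega> \<in> X} \<in> null_sets \<tau>" using h k unfolding Prop01_def by blast
          have "{s\<in>E k. upd m s \<omega> \<in> D} = E k - {s. upd m s \<omega> \<in> X}" using memD False by blast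
          then show ?thesis using n0 by (simp add: null_sets_def)
        qed
      qed
    qed
    then show ?thesis by (rule UF_null2[OF m Ds Ek])
  qed
  have "D = (\<Union>k\<in>{..<K}. {\<omega>\<in>D. fst (\<omega> m) \<in> E k})"
  proof
    show "D \<subseteq> (\<Union>k\<in>{..<K}. {\<omega>\<in>D. fst (\<omega> m) \<in> E k})"
    proof
      fix \<omega> assume wD: "\<omega> \<in> D"
      then have w: "\<omega> \<in> space M" using Dsp by blast
      show "\<omega> \<in> (\<Union>k\<in>{..<K}. {\<omega>\<in>D. fst (\<omega> m) \<in> E k})"
      proof (cases "fst (\<omega> m) \<in> Ucl")
        case True
        then have "\<omega> \<in> Avg m X \<longleftrightarrow> \<omega> \<in> X" by (rule Avg_U[OF w])
        then have False using wD unfolding D_def by blast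
        then show ?thesis ..
      next
        case False
        then obtain k where "k < K" "fst (\<omega> m) \<in> E k" using cls_cases by blast
        then show ?thesis using wD by blast
      qed
    qed
  qed blast
  also have "\<dots> \<in> null_sets M" by (intro null_sets.finite_UN Zk) auto
  finally show ?thesis unfolding D_def .
qed

lemma transfer:
  assumes m: "m < n" and X: "X \<in> sets M" and B: "B \<in> sets M" and XB: "(X - B) \<union> (B - X) \<in> null_sets M"
    and pb: "\<forall>\<omega>\<in>space M. \<forall>k<K. Prop01 B m \<omega> k"
  shows "AE \<omega> in M. \<forall>k<K. Prop01 X m \<omega> k"
  using UF_null1[OF m XB]
proof (rule AE_mp)
  show "AE \<omega> in M. emeasure \<tau> {s. upd m s \<omega> \<in> (X - B) \<union> (B - X)} = 0 \<longrightarrow> (\<forall>k<K. Prop01 X m \<omega> k)"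
  proof (rule AE_I2, intro impI allI)
    fix \<omega> k assume w: "\<omega> \<in> space M" and e0: "emeasure \<tau> {s. upd m s \<omega> \<in> (X - B) \<union> (B - X)} = 0" and k: "k < K"
    have Ek: "E k \<in> sets \<tau>" using Es k by blast
    have XBs: "(X - B) \<union> (B - X) \<in> sets M" using X B by auto
    have N0: "{s. upd m s \<omega> \<in> (X - B) \<union> (B - X)} \<in> null_sets \<tau>"
      using e0 sec_sets[OF m w XBs] by (simp add: null_sets_def)
    have sX: "{s. upd m s \<omega> \<in> X} \<in> sets \<tau>" by (rule sec_sets[OF m w X])
    have sB: "{s. upd m s \<omega> \<in> B} \<in> sets \<tau>" by (rule sec_sets[OF m w B])
    have "Prop01 B m \<omega> k" using pb w k by blast
    then show "Prop01 X m \<omega> k" unfolding Prop01_def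
    proof
      assume nb: "{s\<in>E k. upd m s \<omega> \<in> B} \<in> null_sets \<tau>"
      have "{s\<in>E k. upd m s \<omega> \<in> X} \<subseteq> {s\<in>E k. upd m s \<omega> \<in> B} \<union> {s. upd m s \<omega> \<in> (X - B) \<union> (B - X)}" by blast
      moreover have "{s\<in>E k. upd m s \<omega> \<in> X} \<in> sets \<tau>"
      proof -
        have "{s\<in>E k. upd m s \<omega> \<in> X} = E k \<inter> {s. upd m s \<omega> \<in> X}" by blast
        then show ?thesis using sX Ek by simp
      qed
      ultimately have "{s\<in>E k. upd m s \<omega> \<in> X} \<in> null_sets \<tau>"
        using null_sets_subset[OF null_sets.Un[OF nb N0]] by blast
      then show "{s\<in>E k. upd m s \<omega> \<in> X} \<in> null_sets \<tau> \<or> E k - {s. upd m s \<omega> \<in> X} \<in> null_sets \<tau>" ..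
    next
      assume nb: "E k - {s. upd m s \<omega> \<in> B} \<in> null_sets \<tau>"
      have "E k - {s. upd m s \<omega> \<in> X} \<subseteq> (E k - {s. upd m s \<omega> \<in> B}) \<union> {s. upd m s \<omega> \<in> (X - B) \<union> (B - X)}" by blast
      moreover have "E k - {s. upd m s \<omega> \<in> X} \<in> sets \<tau>" using sX Ek by auto
      ultimately have "E k - {s. upd m s \<omega> \<in> X} \<in> null_sets \<tau>"
        using null_sets_subset[OF null_sets.Un[OF nb N0]] by blast
      then show "{s\<in>E k. upd m s \<omega> \<in> X} \<in> null_sets \<tau> \<or> E k - {s. upd m s \<omega> \<in> X} \<in> null_sets \<tau>" ..
    qed
  qed
qed

definition indep :: "nat \<Rightarrow> (nat \<Rightarrow> 't \<times> 'r) set \<Rightarrow> bool" where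
  "indep i X \<longleftrightarrow> (\<forall>\<omega>\<in>space M. \<forall>k<K. \<forall>s\<in>E k. fst (\<omega> i) \<in> E k \<longrightarrow> (upd i s \<omega> \<in> X \<longleftrightarrow> \<omega> \<in> X))"

lemma indep_Avg_self: assumes m: "m < n" shows "indep m (Avg m X)"
  unfolding indep_def
proof (intro ballI allI impI)
  fix \<omega> k s assume w: "\<omega> \<in> space M" and k: "k < K" and s: "s \<in> E k" and e: "fst (\<omega> m) \<in> E k"
  have us: "upd m s \<omega> \<in> space M" by (rule upd_space[OF w m])
  have "upd m s \<omega> \<in> Avg m X \<longleftrightarrow> emeasure \<tau> {s'\<in>E k. upd m s' (upd m s \<omega>) \<in> X} \<noteq> 0"
    by (rule Avg_E[OF us k]) (simp add: s)
  also have "\<dots> \<longleftrightarrow> emeasure \<tau> {s'\<in>E k. upd m s' \<omega> \<in> X} \<noteq> 0" by simp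
  also have "\<dots> \<longleftrightarrow> \<omega> \<in> Avg m X" by (rule Avg_E[OF w k e, symmetric])
  finally show "upd m s \<omega> \<in> Avg m X \<longleftrightarrow> \<omega> \<in> Avg m X" .
qed

lemma indep_Avg_other:
  assumes i: "i < n" and m: "m < n" and im: "i \<noteq> m" and ind: "indep i X"
  shows "indep i (Avg m X)"
  unfolding indep_def
proof (intro ballI allI impI)
  fix \<omega> k s assume w: "\<omega> \<in> space M" and k: "k < K" and s: "s \<in> E k" and e: "fst (\<omega> i) \<in> E k"
  define \<omega>' where "\<omega>' = upd i s \<omega>"
  have w': "\<omega>' \<in> space M" unfolding \<omega>'_def by (rule upd_space[OF w i])
  have fm: "fst (\<omega>' m) = fst (\<omega> m)" unfolding \<omega>'_def using im by simp
  have indX: "upd i s y \<in> X \<longleftrightarrow> y \<in> X" if "y \<in> space M" "fst (y i) \<in> E k" for y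
    using ind that k s unfolding indep_def by blast
  show "upd i s \<omega> \<in> Avg m X \<longleftrightarrow> \<omega> \<in> Avg m X"
  proof (cases "fst (\<omega> m) \<in> Ucl")
    case True
    have "\<omega>' \<in> Avg m X \<longleftrightarrow> \<omega>' \<in> X" by (rule Avg_U[OF w']) (simp add: fm True)
    also have "\<dots> \<longleftrightarrow> \<omega> \<in> X" unfolding \<omega>'_def by (rule indX[OF w e])
    also have "\<dots> \<longleftrightarrow> \<omega> \<in> Avg m X" by (rule Avg_U[OF w True, symmetric])
    finally show ?thesis unfolding \<omega>'_def .
  next
    case False
    then obtain k' where k': "k' < K" "fst (\<omega> m) \<in> E k'" using cls_cases by blast
    have seq: "{s'\<in>E k'. upd m s' \<omega>' \<in> X} = {s'\<in>E k'. upd m s' \<omega> \<in> X}"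
    proof -
      have "upd m s' \<omega>' \<in> X \<longleftrightarrow> upd m s' \<omega> \<in> X" for s'
      proof -
        have "upd m s' \<omega>' = upd i s (upd m s' \<omega>)" unfolding \<omega>'_def using upd_comm[OF im] by simp
        moreover have "upd m s' \<omega> \<in> space M" by (rule upd_space[OF w m])
        moreover have "fst (upd m s' \<omega> i) \<in> E k" using im e by simp
        ultimately show ?thesis using indX by simp
      qed
      then show ?thesis by blast
    qed
    have "\<omega>' \<in> Avg m X \<longleftrightarrow> emeasure \<tau> {s'\<in>E k'. upd m s' \<omega>' \<in> X} \<noteq> 0"
      by (rule Avg_E[OF w' k'(1)]) (simp add: fm k'(2))
    also have "\<dots> \<longleftrightarrow> emeasure \<tau> {s'\<in>E k'. upd m s' \<omega> \<in> X} \<noteq> 0" by (simp add: seq)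
    also have "\<dots> \<longleftrightarrow> \<omega> \<in> Avg m X" by (rule Avg_E[OF w k'(1) k'(2), symmetric])
    finally show ?thesis unfolding \<omega>'_def .
  qed
qed

end

context main_setting begin

primrec Xseq :: "(nat \<Rightarrow> 't \<times> 'r) set \<Rightarrow> nat \<Rightarrow> (nat \<Rightarrow> 't \<times> 'r) set" where
  "Xseq B 0 = B"
| "Xseq B (Suc p) = Avg p (Xseq B p)"

lemma seq_props:
  assumes B: "B \<in> invariant_sets M ((\<lambda>g. gn g n) ` G)"
  shows "p \<le> n \<Longrightarrow> Xseq B p \<in> sets M \<and> (Xseq B p - B) \<union> (B - Xseq B p) \<in> null_sets M \<and> (\<forall>i<p. indep i (Xseq B p))"
proof (induction p)
  case 0
  have Bs: "B \<in> sets M" using B unfolding invariant_sets_def by auto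
  then show ?case by simp
next
  case (Suc p)
  have Bs: "B \<in> sets M" using B unfolding invariant_sets_def by auto
  have p: "p < n" using Suc.prems by simp
  define X where "X = Xseq B p"
  have IH: "X \<in> sets M" "(X - B) \<union> (B - X) \<in> null_sets M" "\<forall>i<p. indep i X"
    using Suc.IH Suc.prems unfolding X_def by auto
  have pb: "\<forall>\<omega>\<in>space M. \<forall>k<K. Prop01 B p \<omega> k"
    unfolding Prop01_def using core[OF B p] by blast
  have ae: "AE \<omega> in M. \<forall>k<K. Prop01 X p \<omega> k" by (rule transfer[OF p IH(1) Bs IH(2) pb])
  have d1: "(X - Avg p X) \<union> (Avg p X - X) \<in> null_sets M" by (rule avg_ae[OF p IH(1) ae])
  have As: "Avg p X \<in> sets M" by (rule Avg_sets[OF p IH(1)])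
  have "(Avg p X - B) \<union> (B - Avg p X) \<subseteq> ((X - Avg p X) \<union> (Avg p X - X)) \<union> ((X - B) \<union> (B - X))" by blast
  moreover have "(Avg p X - B) \<union> (B - Avg p X) \<in> sets M" using As Bs by auto
  ultimately have d2: "(Avg p X - B) \<union> (B - Avg p X) \<in> null_sets M"
    using null_sets_subset[OF null_sets.Un[OF d1 IH(2)]] by blast
  have ind: "\<forall>i<Suc p. indep i (Avg p X)"
  proof (intro allI impI)
    fix i assume i: "i < Suc p"
    show "indep i (Avg p X)"
    proof (cases "i = p")
      case True then show ?thesis using indep_Avg_self[OF p] by simp
    next
      case False
      then have ip: "i < p" using i by simp
      then show ?thesis using indep_Avg_other[of i p X] IH(3) p False by simp
    qed
  qed
  show ?case using As d2 ind unfolding X_def by simp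
qed

definition ecl :: "nat \<Rightarrow> 't" where "ecl k = (SOME s. s \<in> E k)"

definition cmap :: "'t \<Rightarrow> 't" where
  "cmap t = (if \<exists>k<K. t \<in> E k then ecl (SOME k. k < K \<and> t \<in> E k) else t)"

lemma cmap_E: "k < K \<Longrightarrow> t \<in> E k \<Longrightarrow> cmap t = ecl k \<and> ecl k \<in> E k"
proof -
  assume k: "k < K" and t: "t \<in> E k"
  have ex: "\<exists>k<K. t \<in> E k" using k t by blast
  have "(SOME k. k < K \<and> t \<in> E k) < K \<and> t \<in> E (SOME k. k < K \<and> t \<in> E k)"
    using someI_ex[of "\<lambda>k. k < K \<and> t \<in> E k"] ex by blast
  then have "(SOME k. k < K \<and> t \<in> E k) = k" using Edisj_pt k t by blast
  then have "cmap t = ecl k" unfolding cmap_def using ex by simp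
  moreover have "ecl k \<in> E k" unfolding ecl_def using t by (rule someI)
  ultimately show ?thesis by simp
qed

lemma cmap_U: "t \<in> Ucl \<Longrightarrow> cmap t = t"
  unfolding cmap_def Ucl_def by auto

definition phi :: "nat \<Rightarrow> (nat \<Rightarrow> 't \<times> 'r) \<Rightarrow> (nat \<Rightarrow> 't \<times> 'r)" where
  "phi p \<omega> = (\<lambda>j. if j < p then (cmap (fst (\<omega> j)), snd (\<omega> j)) else \<omega> j)"

lemma phi_props:
  assumes C: "C \<in> sets M" and ind: "\<forall>i<n. indep i C" and w: "\<omega> \<in> space M"
  shows "p \<le> n \<Longrightarrow> phi p \<omega> \<in> space M \<and> (phi p \<omega> \<in> C \<longleftrightarrow> \<omega> \<in> C)"
proof (induction p)
  case 0
  have "phi 0 \<omega> = \<omega>" unfolding phi_def by simp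
  then show ?case using w by simp
next
  case (Suc p)
  have p: "p < n" using Suc.prems by simp
  have IH: "phi p \<omega> \<in> space M" "phi p \<omega> \<in> C \<longleftrightarrow> \<omega> \<in> C" using Suc.IH Suc.prems by auto
  show ?case
  proof (cases "fst (\<omega> p) \<in> Ucl")
    case True
    have "phi (Suc p) \<omega> = phi p \<omega>" unfolding phi_def using cmap_U[OF True]
      by (intro ext) (auto simp: less_Suc_eq)
    then show ?thesis using IH by simp
  next
    case False
    then obtain k where k: "k < K" "fst (\<omega> p) \<in> E k" using cls_cases by blast
    have ck: "cmap (fst (\<omega> p)) \<in> E k" using cmap_E[OF k] by simp
    have eq: "phi (Suc p) \<omega> = upd p (cmap (fst (\<omega> p))) (phi p \<omega>)"
      unfolding phi_def upd_def by (intro ext) (auto simp: less_Suc_eq)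
    have fp: "fst (phi p \<omega> p) \<in> E k" unfolding phi_def using k by simp
    have "upd p (cmap (fst (\<omega> p))) (phi p \<omega>) \<in> C \<longleftrightarrow> phi p \<omega> \<in> C"
      using ind p IH(1) k(1) ck fp unfolding indep_def by blast
    moreover have "upd p (cmap (fst (\<omega> p))) (phi p \<omega>) \<in> space M" by (rule upd_space[OF IH(1) p])
    ultimately show ?thesis using IH eq by simp
  qed
qed

abbreviation "TEm \<equiv> TE \<tau> K E"

lemma TE_gens: "{B \<inter> (space \<tau> - (\<Union>i<K. E i)) | B. B \<in> sets \<tau>} \<union> E ` {..<K} \<subseteq> Pow (space \<tau>)"
  using spc by auto

lemma sets_TE: "sets TEm = sigma_sets (space \<tau>) ({B \<inter> (space \<tau> - (\<Union>i<K. E i)) | B. B \<in> sets \<tau>} \<union> E ` {..<K})"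
  unfolding TE_def by (rule sets_measure_of[OF TE_gens])

lemma space_TE: "space TEm = UNIV"
  unfolding TE_def using space_measure_of[OF TE_gens] spc by simp

lemma cmap_meas: "cmap \<in> measurable TEm \<tau>"
proof (rule measurableI)
  fix x show "cmap x \<in> space \<tau>" using spc by simp
next
  fix A assume A: "A \<in> sets \<tau>"
  have u: "A \<inter> Ucl \<in> sets TEm"
  proof -
    have "A \<inter> Ucl = A \<inter> (space \<tau> - (\<Union>i<K. E i))" unfolding Ucl_def spc by simp
    then show ?thesis unfolding sets_TE using A by (intro sigma_sets.Basic) blast
  qed
  have e: "E k \<in> sets TEm" if "k < K" for k
    unfolding sets_TE using that by (intro sigma_sets.Basic) blast
  have eq: "cmap -` A \<inter> space TEm = (A \<inter> Ucl) \<union> (\<Union>k\<in>{k. k < K \<and> ecl k \<in> A}. E k)"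
  proof (rule set_eqI)
    fix t
    show "t \<in> cmap -` A \<inter> space TEm \<longleftrightarrow> t \<in> (A \<inter> Ucl) \<union> (\<Union>k\<in>{k. k < K \<and> ecl k \<in> A}. E k)"
    proof (cases "t \<in> Ucl")
      case True
      then have "\<not> (\<exists>k<K. t \<in> E k)" unfolding Ucl_def by blast
      then show ?thesis using True cmap_U[OF True] space_TE by auto
    next
      case False
      then obtain k where k: "k < K" "t \<in> E k" using cls_cases by blast
      have c: "cmap t = ecl k" using cmap_E[OF k] by simp
      have "t \<in> (\<Union>k\<in>{k. k < K \<and> ecl k \<in> A}. E k) \<longleftrightarrow> ecl k \<in> A"
        using Edisj_pt k by blast
      then show ?thesis using False c space_TE by auto
    qed
  qed
  show "cmap -` A \<inter> space TEm \<in> sets TEm"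
    unfolding eq using u e by (intro sets.Un sets.finite_UN) auto
qed

definition Phi :: "(nat \<Rightarrow> 't \<times> 'r) \<Rightarrow> (nat \<Rightarrow> 't \<times> 'r)" where
  "Phi \<omega> = (\<lambda>j. if j < n then (cmap (fst (\<omega> j)), snd (\<omega> j)) else undefined)"

lemma space_MTE: "space (\<Pi>\<^sub>M i\<in>{..<n}. TEm \<Otimes>\<^sub>M \<rho>) = space M"
  by (simp add: space_PiM space_pair_measure space_TE spc)

lemma Phi_meas: "Phi \<in> measurable (\<Pi>\<^sub>M i\<in>{..<n}. TEm \<Otimes>\<^sub>M \<rho>) M"
proof -
  have eq: "Phi = (\<lambda>\<omega> j. (\<lambda>j \<omega>. if j < n then (cmap (fst (\<omega> j)), snd (\<omega> j)) else undefined) j \<omega>)"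
    unfolding Phi_def by simp
  show ?thesis unfolding eq
  proof (rule measurable_PiM_single')
    fix j assume j: "j \<in> {..<n}"
    have c1: "(\<lambda>\<omega>. \<omega> j) \<in> measurable (\<Pi>\<^sub>M i\<in>{..<n}. TEm \<Otimes>\<^sub>M \<rho>) (TEm \<Otimes>\<^sub>M \<rho>)"
      by (rule measurable_component_singleton[OF j])
    have a: "(\<lambda>\<omega>. cmap (fst (\<omega> j))) \<in> measurable (\<Pi>\<^sub>M i\<in>{..<n}. TEm \<Otimes>\<^sub>M \<rho>) \<tau>"
      using measurable_compose[OF measurable_compose[OF c1 measurable_fst] cmap_meas] by simp
    have b: "(\<lambda>\<omega>. snd (\<omega> j)) \<in> measurable (\<Pi>\<^sub>M i\<in>{..<n}. TEm \<Otimes>\<^sub>M \<rho>) \<rho>"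
      using measurable_compose[OF c1 measurable_snd] by simp
    have "(\<lambda>\<omega>. (cmap (fst (\<omega> j)), snd (\<omega> j))) \<in> measurable (\<Pi>\<^sub>M i\<in>{..<n}. TEm \<Otimes>\<^sub>M \<rho>) N1"
      by (rule measurable_Pair[OF a b])
    then show "(\<lambda>\<omega>. if j < n then (cmap (fst (\<omega> j)), snd (\<omega> j)) else undefined) \<in> measurable (\<Pi>\<^sub>M i\<in>{..<n}. TEm \<Otimes>\<^sub>M \<rho>) N1"
      using j by simp
  next
    show "(\<lambda>\<omega> j. if j < n then (cmap (fst (\<omega> j)), snd (\<omega> j)) else undefined) \<in> space (\<Pi>\<^sub>M i\<in>{..<n}. TEm \<Otimes>\<^sub>M \<rho>) \<rightarrow> (\<Pi>\<^sub>E j\<in>{..<n}. space N1)"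
    proof
      fix \<omega> assume w: "\<omega> \<in> space (\<Pi>\<^sub>M i\<in>{..<n}. TEm \<Otimes>\<^sub>M \<rho>)"
      have "\<forall>j<n. snd (\<omega> j) \<in> space \<rho>"
      proof (intro allI impI)
        fix j assume "j < n"
        then have "\<omega> j \<in> UNIV \<times> space \<rho>" using w unfolding space_MTE space_M by auto
        then show "snd (\<omega> j) \<in> space \<rho>" by auto
      qed
      then show "(\<lambda>j. if j < n then (cmap (fst (\<omega> j)), snd (\<omega> j)) else undefined) \<in> (\<Pi>\<^sub>E j\<in>{..<n}. space N1)"
        unfolding space_N1 by (auto simp: PiE_iff extensional_def)
    qed
  qed
qed

lemma C_TE:
  assumes C: "C \<in> sets M" and ind: "\<forall>i<n. indep i C"
  shows "C \<in> sets (\<Pi>\<^sub>M i\<in>{..<n}. TEm \<Otimes>\<^sub>M \<rho>)"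
proof -
  have "Phi -` C \<inter> space (\<Pi>\<^sub>M i\<in>{..<n}. TEm \<Otimes>\<^sub>M \<rho>) = C"
  proof (rule set_eqI)
    fix \<omega>
    show "\<omega> \<in> Phi -` C \<inter> space (\<Pi>\<^sub>M i\<in>{..<n}. TEm \<Otimes>\<^sub>M \<rho>) \<longleftrightarrow> \<omega> \<in> C"
    proof (cases "\<omega> \<in> space M")
      case True
      have wext: "\<omega> \<in> extensional {..<n}" using True unfolding space_M by (simp add: PiE_iff)
      have "Phi \<omega> = phi n \<omega>" unfolding Phi_def phi_def
        using wext by (intro ext) (auto simp: extensional_def)
      then have "Phi \<omega> \<in> C \<longleftrightarrow> \<omega> \<in> C" using phi_props[OF C ind True, of n] by simp
      then show ?thesis using True space_MTE by simp
    next
      case False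
      then show ?thesis using sets.sets_into_space[OF C] space_MTE by auto
    qed
  qed
  moreover have "Phi -` C \<inter> space (\<Pi>\<^sub>M i\<in>{..<n}. TEm \<Otimes>\<^sub>M \<rho>) \<in> sets (\<Pi>\<^sub>M i\<in>{..<n}. TEm \<Otimes>\<^sub>M \<rho>)"
    by (rule measurable_sets[OF Phi_meas C])
  ultimately show ?thesis by simp
qed

lemma main:
  assumes B: "B \<in> invariant_sets M ((\<lambda>g. gn g n) ` G)"
  shows "B \<in> sigma_sets (space M) (sets (\<Pi>\<^sub>M i\<in>{..<n}. TEm \<Otimes>\<^sub>M \<rho>) \<union> null_sets M)"
proof -
  have Bs: "B \<in> sets M" using B unfolding invariant_sets_def by auto
  define C where "C = Xseq B n"
  have Cp: "C \<in> sets M" "(C - B) \<union> (B - C) \<in> null_sets M" "\<forall>i<n. indep i C"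
    using seq_props[OF B, of n] unfolding C_def by auto
  have CT: "C \<in> sets (\<Pi>\<^sub>M i\<in>{..<n}. TEm \<Otimes>\<^sub>M \<rho>)" by (rule C_TE[OF Cp(1) Cp(3)])
  have n1: "C - B \<in> null_sets M" using null_sets_subset[OF Cp(2)] Cp(1) Bs by blast
  have n2: "B - C \<in> null_sets M" using null_sets_subset[OF Cp(2)] Cp(1) Bs by blast
  define Gs where "Gs = sets (\<Pi>\<^sub>M i\<in>{..<n}. TEm \<Otimes>\<^sub>M \<rho>) \<union> null_sets M"
  have GP: "Gs \<subseteq> Pow (space M)"
    unfolding Gs_def using sets.sets_into_space space_MTE by (auto dest: sets.sets_into_space)
  interpret SA: sigma_algebra "space M" "sigma_sets (space M) Gs" by (rule sigma_algebra_sigma_sets[OF GP])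
  have a: "C \<in> sigma_sets (space M) Gs" unfolding Gs_def using CT by (intro sigma_sets.Basic) blast
  have b: "C - B \<in> sigma_sets (space M) Gs" unfolding Gs_def using n1 by (intro sigma_sets.Basic) blast
  have c: "B - C \<in> sigma_sets (space M) Gs" unfolding Gs_def using n2 by (intro sigma_sets.Basic) blast
  have eq: "B = (C - (C - B)) \<union> (B - C)" by blast
  have "(C - (C - B)) \<union> (B - C) \<in> sigma_sets (space M) Gs" by (rule SA.Un[OF SA.Diff[OF a b] c])
  then show ?thesis unfolding Gs_def using eq by simp
qed

end

theorem theorem4p3:
  fixes \<tau> :: "'t measure" and \<rho> :: "'r measure"
    and Lp :: "nat \<Rightarrow> nat" and P :: "nat \<Rightarrow> nat \<Rightarrow> 't set"
    and G :: "('t \<Rightarrow> 't) set" and n K :: nat and E :: "nat \<Rightarrow> 't set"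
  assumes "prob_space \<tau>" and "space \<tau> = UNIV"
    and "partition_filtration \<tau> Lp P"
    and "aut_group \<tau> G"
    and "sigma_finite_measure \<rho>" and "emeasure \<rho> (space \<rho>) > 0"
    and "\<forall>i<K. E i \<in> sets \<tau>"
    and "disjoint_family_on E {..<K}"
    and "\<forall>i<K. locally_ergodic \<tau> Lp P G (E i)"
  shows "invariant_sets (\<Pi>\<^sub>M i\<in>{..<n}. \<tau> \<Otimes>\<^sub>M \<rho>) ((\<lambda>g. gn g n) ` G)
     \<subseteq> sigma_sets (space (\<Pi>\<^sub>M i\<in>{..<n}. \<tau> \<Otimes>\<^sub>M \<rho>))
          (sets (\<Pi>\<^sub>M i\<in>{..<n}. TE \<tau> K E \<Otimes>\<^sub>M \<rho>) \<union> null_sets (\<Pi>\<^sub>M i\<in>{..<n}. \<tau> \<Otimes>\<^sub>M \<rho>))"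
  proof -
  interpret main_setting \<tau> Lp P G \<rho> n K E
  proof (intro main_setting.intro pf_setting.intro pf_setting_axioms.intro main_setting_axioms.intro)
    show "prob_space \<tau>" by fact
  qed (use assms in auto)
  show ?thesis using main by blast
qed

end
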